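(* Let $k\ge0$ be an integer, let $\mathcal H$ be a hypergraph, and let $\vec{\mathcal H}$ and $\vec{\mathcal H}'$ be two $k$-hyperarc-connected orientations of $\mathcal H$. Then there is a sequence $\vec{\mathcal H}=\vec{\mathcal H}_0,\vec{\mathcal H}_1,\ldots,\vec{\mathcal H}_\ell=\vec{\mathcal H}'$ of $k$-hyperarc-connected orientations of $\mathcal H$ such that for each $1\le i\le \ell$, $\vec{\mathcal H}_i$ arises from $\vec{\mathcal H}_{i-1}$ by reversing one directed hypercycle or one directed hyperpath of $\vec{\mathcal H}_{i-1}$.
   Context: A hypergraph $\mathcal H=(V,\mathcal E)$ consists of a finite vertex set $V$ and a finite multiset $\mathcal E$ of nonempty subsets of $V$ (hyperedges). Orienting a hyperedge $Z$ towards a vertex $v\in Z$ yields the hyperarc $(Z\setminus\{v\},v)$, with tail set $Z\setminus\{v\}$ and head $v$. An orientation $\vec{\mathcal H}$ of $\mathcal H$ is obtained by orienting every hyperedge (it is the multiset of resulting hyperarcs). For $\emptyset\ne X\subsetneq V$, the out-degree $d^+(X)$ is the number of hyperarcs $(Y,v)$ with $v\notin X$ and $Y\cap X\neq\emptyset$; $\vec{\mathcal H}$ is $k$-hyperarc-connected if $d^+(X)\ge k$ for every $\emptyset\neq X\subsetneq V$. For vertices $s,t$, an $(s,t)$-hyperpath is a sequence $(A_1,a_1),\ldots,(A_\ell,a_\ell)$ ($\ell\ge1$) of hyperarcs of the orientation with $s\in A_1$, $a_\ell=t$, $a_i\in A_{i+1}$ for $1\le i\le \ell-1$, and $a_1,\ldots,a_\ell$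 pairwise distinct; if $s=t$ it is called a directed hypercycle. Reversing such a hyperpath or hypercycle means, with $a_0:=s$, replacing each hyperarc $(A_i,a_i)$ by $((A_i\setminus\{a_{i-1}\})\cup\{a_i\},a_{i-1})$, for $i=1,\ldots,\ell$. *)

theory Defs
  imports Main "HOL-Library.Multiset"
begin

type_synonym 'v hyperarc = "'v set \<times> 'v"

definition hypergraph :: "'v set \<Rightarrow> 'v set multiset \<Rightarrow> bool" where
  "hypergraph V E \<longleftrightarrow> finite V \<and> (\<forall>Z\<in>#E. Z \<noteq> {} \<and> Z \<subseteq> V)"

text \<open>Orienting a hyperedge Z towards v in Z gives (Z - {v}, v); an orientation is the
  multiset of hyperarcs obtained by orienting every hyperedge.\<close>
definition is_orientation :: "'v set multiset \<Rightarrow> 'v hyperarc multiset \<Rightarrow> bool" where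
  "is_orientation E D \<longleftrightarrow>
     image_mset (\<lambda>(A, v). insert v A) D = E \<and> (\<forall>(A, v)\<in>#D. v \<notin> A)"

definition out_degree :: "'v hyperarc multiset \<Rightarrow> 'v set \<Rightarrow> nat" where
  "out_degree D X = size (filter_mset (\<lambda>(Y, v). v \<notin> X \<and> Y \<inter> X \<noteq> {}) D)"

definition k_hyperarc_connected :: "'v set \<Rightarrow> nat \<Rightarrow> 'v hyperarc multiset \<Rightarrow> bool" where
  "k_hyperarc_connected V k D \<longleftrightarrow> (\<forall>X. X \<noteq> {} \<and> X \<subset> V \<longrightarrow> out_degree D X \<ge> k)"

text \<open>(s,t)-hyperpath (a directed hypercycle when s = t) in orientation D.\<close>
definition hyperpath :: "'v hyperarc multiset \<Rightarrow> 'v \<Rightarrow> 'v \<Rightarrow> 'v hyperarc list \<Rightarrow> bool" where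
  "hyperpath D s t P \<longleftrightarrow>
     P \<noteq> [] \<and> set P \<subseteq> set_mset D \<and> s \<in> fst (P ! 0) \<and> snd (last P) = t \<and>
     (\<forall>i. i + 1 < length P \<longrightarrow> snd (P ! i) \<in> fst (P ! (i + 1))) \<and>
     distinct (map snd P)"

text \<open>Reversal: with a_0 = s, (A_i, a_i) becomes ((A_i - {a_(i-1)}) \<union> {a_i}, a_(i-1)).\<close>
definition reversed_arcs :: "'v \<Rightarrow> 'v hyperarc list \<Rightarrow> 'v hyperarc list" where
  "reversed_arcs s P = map2 (\<lambda>(A, a) p. ((A - {p}) \<union> {a}, p)) P (s # map snd P)"

definition reverse_step :: "'v hyperarc multiset \<Rightarrow> 'v hyperarc multiset \<Rightarrow> bool" where
  "reverse_step D D' \<longleftrightarrow>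
     (\<exists>s t P. hyperpath D s t P \<and> D' = D - mset P + mset (reversed_arcs s P))"

end

theory Submission imports Defs begin

definition Mh :: "'v hyperarc multiset \<Rightarrow> 'v set \<Rightarrow> nat" where
  "Mh D W = size {#x \<in># D. snd x \<in> W#}"
definition Ie :: "'v set multiset \<Rightarrow> 'v set \<Rightarrow> nat" where
  "Ie E W = size {#Z \<in># E. Z \<subseteq> W#}"

lemma distinct_mset_sub:
  assumes "distinct xs" "set xs \<subseteq> set_mset M" shows "mset xs \<subseteq># M"
proof (subst subseteq_mset_def, intro allI)
  fix y
  show "count (mset xs) y \<le> count M y"
  proof (cases "y \<in> set xs")
    case True
    then have "count (mset xs) y = 1" using assms(1) by (simp add: distinct_count_atmost_1)
    moreover have "count M y \<ge> 1" using True assms(2) by auto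
    ultimately show ?thesis by simp
  next
    case False then show ?thesis by (metis count_mset_0_iff le0)
  qed
qed

lemma size_filter_split3:
  assumes "\<forall>x\<in>#D. Q x" "\<And>x. Q x \<Longrightarrow> (P3 x \<longleftrightarrow> P1 x \<or> P2 x) \<and> \<not> (P1 x \<and> P2 x)"
  shows "size (filter_mset P1 D) + size (filter_mset P2 D) = size (filter_mset P3 D)"
  using assms(1)
proof (induction D)
  case empty then show ?case by simp
next
  case (add x D)
  have Qx: "Q x" and IH: "size (filter_mset P1 D) + size (filter_mset P2 D) = size (filter_mset P3 D)"
    using add by auto
  have e: "(P3 x \<longleftrightarrow> P1 x \<or> P2 x) \<and> \<not> (P1 x \<and> P2 x)" using assms(2)[OF Qx] .
  show ?case using IH e by (cases "P1 x"; cases "P2 x"; cases "P3 x"; simp)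
qed

lemma orient_arc:
  assumes "is_orientation E D" "(A, v) \<in># D"
  shows "v \<notin> A" "insert v A \<in># E"
proof -
  have o: "\<forall>(A, v)\<in>#D. v \<notin> A" and e: "image_mset (\<lambda>(A, v). insert v A) D = E"
    using assms(1) unfolding is_orientation_def by blast+
  show "v \<notin> A" using bspec[OF o assms(2)] by simp
  have "(\<lambda>(A, v). insert v A) (A, v) \<in># image_mset (\<lambda>(A, v). insert v A) D"
    using assms(2) by (simp only: set_image_mset) (rule imageI)
  then have "insert v A \<in># image_mset (\<lambda>(A, v). insert v A) D" by simp
  then show "insert v A \<in># E" unfolding e .
qed

lemma orient_arc_V:
  assumes "hypergraph V E" "is_orientation E D" "(A, v) \<in># D"
  shows "v \<in> V" "A \<subseteq> V"
proof -
  have h: "\<forall>Z\<in>#E. Z \<noteq> {} \<and> Z \<subseteq> V" using assms(1) unfolding hypergraph_def by simp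
  have "insert v A \<subseteq> V" using bspec[OF h orient_arc(2)[OF assms(2,3)]] by simp
  then show "v \<in> V" "A \<subseteq> V" by simp_all
qed

lemma Ie_orient:
  assumes "is_orientation E D"
  shows "Ie E W = size {#x \<in># D. (case x of (A, v) \<Rightarrow> insert v A) \<subseteq> W#}"
proof -
  have E: "E = image_mset (\<lambda>(A, v). insert v A) D" using assms unfolding is_orientation_def by simp
  show ?thesis unfolding Ie_def E filter_mset_image_mset size_image_mset ..
qed

lemma od_eq:
  assumes "hypergraph V E" "is_orientation E D" "X \<subseteq> V"
  shows "out_degree D X + Ie E (V - X) = Mh D (V - X)"
proof -
  have Q: "\<forall>x\<in>#D. snd x \<in> V \<and> fst x \<subseteq> V"
  proof
    fix x assume x: "x \<in># D"
    obtain A v where xe: "x = (A, v)" by (cases x)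
    show "snd x \<in> V \<and> fst x \<subseteq> V" using orient_arc_V[OF assms(1,2), of A v] x xe by simp
  qed
  have "size {#x \<in># D. (\<lambda>(Y, v). v \<notin> X \<and> Y \<inter> X \<noteq> {}) x#}
     + size {#x \<in># D. (case x of (A, v) \<Rightarrow> insert v A) \<subseteq> V - X#} = size {#x \<in># D. snd x \<in> V - X#}"
  proof (rule size_filter_split3[where Q="\<lambda>x. snd x \<in> V \<and> fst x \<subseteq> V"])
    show "\<forall>x\<in>#D. snd x \<in> V \<and> fst x \<subseteq> V" by (rule Q)
    fix x :: "'a hyperarc" assume "snd x \<in> V \<and> fst x \<subseteq> V"
    then show "(snd x \<in> V - X \<longleftrightarrow> (\<lambda>(Y, v). v \<notin> X \<and> Y \<inter> X \<noteq> {}) x \<or> (case x of (A, v) \<Rightarrow> insert v A) \<subseteq> V - X) \<and>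
        \<not> ((\<lambda>(Y, v). v \<notin> X \<and> Y \<inter> X \<noteq> {}) x \<and> (case x of (A, v) \<Rightarrow> insert v A) \<subseteq> V - X)"
      by (cases x) auto
  qed
  then show ?thesis unfolding out_degree_def Mh_def Ie_orient[OF assms(2)] by simp
qed

lemma kc_iff:
  assumes "hypergraph V E" "is_orientation E D"
  shows "k_hyperarc_connected V k D \<longleftrightarrow>
    (\<forall>W. W \<subseteq> V \<longrightarrow> W \<noteq> {} \<longrightarrow> W \<noteq> V \<longrightarrow> Ie E W + k \<le> Mh D W)"
proof
  assume kc: "k_hyperarc_connected V k D"
  have kc': "\<And>X. X \<noteq> {} \<Longrightarrow> X \<subset> V \<Longrightarrow> k \<le> out_degree D X"
    using kc unfolding k_hyperarc_connected_def by simp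
  show "\<forall>W. W \<subseteq> V \<longrightarrow> W \<noteq> {} \<longrightarrow> W \<noteq> V \<longrightarrow> Ie E W + k \<le> Mh D W"
  proof (intro allI impI)
    fix W assume W: "W \<subseteq> V" "W \<noteq> {}" "W \<noteq> V"
    have a: "V - W \<noteq> {}" using W by blast
    have b: "V - W \<subset> V" using W by blast
    have "out_degree D (V - W) \<ge> k" using kc'[OF a b] .
    moreover have "V - (V - W) = W" using W by blast
    moreover have "out_degree D (V - W) + Ie E (V - (V - W)) = Mh D (V - (V - W))"
      using od_eq[OF assms, of "V - W"] by simp
    ultimately show "Ie E W + k \<le> Mh D W" by simp
  qed
next
  assume H: "\<forall>W. W \<subseteq> V \<longrightarrow> W \<noteq> {} \<longrightarrow> W \<noteq> V \<longrightarrow> Ie E W + k \<le> Mh D W"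
  show "k_hyperarc_connected V k D" unfolding k_hyperarc_connected_def
  proof (intro allI impI)
    fix X assume X: "X \<noteq> {} \<and> X \<subset> V"
    have a: "V - X \<subseteq> V" by blast
    have b: "V - X \<noteq> {}" using X by blast
    have c: "V - X \<noteq> V" using X by blast
    have "Ie E (V - X) + k \<le> Mh D (V - X)" using H a b c by simp
    moreover have "out_degree D X + Ie E (V - X) = Mh D (V - X)" using od_eq[OF assms, of X] X by blast
    ultimately show "k \<le> out_degree D X" by simp
  qed
qed


definition prv :: "'v \<Rightarrow> 'v hyperarc list \<Rightarrow> nat \<Rightarrow> 'v" where
  "prv s P i = (s # map snd P) ! i"

lemma rev_len: "length (reversed_arcs s P) = length P"
  unfolding reversed_arcs_def by simp

lemma rev_nth: "i < length P \<Longrightarrow>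
  reversed_arcs s P ! i = ((fst (P ! i) - {prv s P i}) \<union> {snd (P ! i)}, prv s P i)"
  unfolding reversed_arcs_def prv_def by (cases "P ! i") simp

lemma hp_prv:
  assumes "hyperpath D s t P" "i < length P"
  shows "prv s P i \<in> fst (P ! i)"
proof (cases i)
  case 0 then show ?thesis using assms unfolding hyperpath_def prv_def by simp
next
  case (Suc j)
  have "snd (P ! j) \<in> fst (P ! (j + 1))" using assms Suc unfolding hyperpath_def by simp
  then show ?thesis using Suc assms(2) unfolding prv_def by simp
qed

lemma hp_distinct: "hyperpath D s t P \<Longrightarrow> distinct P"
  unfolding hyperpath_def using distinct_map by blast

lemma hp_sub: "hyperpath D s t P \<Longrightarrow> mset P \<subseteq># D"
  using hp_distinct distinct_mset_sub unfolding hyperpath_def by metis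

lemma rev_heads:
  assumes "P \<noteq> []"
  shows "map snd (reversed_arcs s P) = s # butlast (map snd P)"
proof (rule nth_equalityI)
  show "length (map snd (reversed_arcs s P)) = length (s # butlast (map snd P))"
    using assms by (simp add: rev_len)
  fix i assume "i < length (map snd (reversed_arcs s P))"
  then have i: "i < length P" by (simp add: rev_len)
  have "map snd (reversed_arcs s P) ! i = prv s P i" using rev_nth[OF i] i by (simp add: rev_len)
  also have "\<dots> = (s # butlast (map snd P)) ! i"
    unfolding prv_def using i by (cases i) (auto simp: nth_butlast)
  finally show "map snd (reversed_arcs s P) ! i = (s # butlast (map snd P)) ! i" .
qed

lemma rev_image:
  assumes "is_orientation E D" "hyperpath D s t P"
  shows "map (\<lambda>(A, v). insert v A) (reversed_arcs s P) = map (\<lambda>(A, v). insert v A) P"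
    and "\<forall>x\<in>set (reversed_arcs s P). snd x \<notin> fst x"
proof -
  have key: "insert (prv s P i) ((fst (P ! i) - {prv s P i}) \<union> {snd (P ! i)}) = insert (snd (P ! i)) (fst (P ! i))
     \<and> prv s P i \<notin> (fst (P ! i) - {prv s P i}) \<union> {snd (P ! i)}" if i: "i < length P" for i
  proof -
    have a: "prv s P i \<in> fst (P ! i)" using hp_prv[OF assms(2) i] .
    have "P ! i \<in> set P" using i by simp
    then have "P ! i \<in># D" using assms(2) unfolding hyperpath_def by blast
    then have b: "snd (P ! i) \<notin> fst (P ! i)" using orient_arc(1)[OF assms(1), of "fst (P ! i)" "snd (P ! i)"] by simp
    from a b have "prv s P i \<noteq> snd (P ! i)" by metis
    with a b show ?thesis by blast
  qed
  show "map (\<lambda>(A, v). insert v A) (reversed_arcs s P) = map (\<lambda>(A, v). insert v A) P"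
  proof (rule nth_equalityI)
    show "length (map (\<lambda>(A, v). insert v A) (reversed_arcs s P)) = length (map (\<lambda>(A, v). insert v A) P)"
      by (simp add: rev_len)
    fix i assume "i < length (map (\<lambda>(A, v). insert v A) (reversed_arcs s P))"
    then have i: "i < length P" by (simp add: rev_len)
    show "map (\<lambda>(A, v). insert v A) (reversed_arcs s P) ! i = map (\<lambda>(A, v). insert v A) P ! i"
      using key[OF i] i rev_nth[OF i] by (simp add: rev_len split: prod.split)
  qed
  show "\<forall>x\<in>set (reversed_arcs s P). snd x \<notin> fst x"
  proof
    fix x assume "x \<in> set (reversed_arcs s P)"
    then obtain i where i: "i < length P" and x: "x = reversed_arcs s P ! i"
      by (auto simp: in_set_conv_nth rev_len)
    show "snd x \<notin> fst x" using key[OF i] rev_nth[OF i] x by simp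
  qed
qed

lemma rev_orient:
  assumes "is_orientation E D" "hyperpath D s t P"
  shows "is_orientation E (D - mset P + mset (reversed_arcs s P))"
proof -
  let ?g = "\<lambda>(A, v). insert v A"
  have sub: "mset P \<subseteq># D" using hp_sub[OF assms(2)] .
  have e: "image_mset ?g D = E" and o: "\<forall>(A, v)\<in>#D. v \<notin> A" using assms(1) unfolding is_orientation_def by blast+
  have im: "image_mset ?g (mset (reversed_arcs s P)) = image_mset ?g (mset P)"
    using rev_image(1)[OF assms] by (metis mset_map)
  have "image_mset ?g (D - mset P + mset (reversed_arcs s P)) = image_mset ?g D - image_mset ?g (mset P) + image_mset ?g (mset P)"
    using image_mset_Diff[OF sub] im by simp
  also have "\<dots> = image_mset ?g D" using image_mset_subseteq_mono[OF sub] by (rule subset_mset.diff_add)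
  finally have 1: "image_mset ?g (D - mset P + mset (reversed_arcs s P)) = E" using e by simp
  have 2: "\<forall>(A, v)\<in>#D - mset P + mset (reversed_arcs s P). v \<notin> A"
  proof
    fix x assume "x \<in># D - mset P + mset (reversed_arcs s P)"
    then have "x \<in># D \<or> x \<in> set (reversed_arcs s P)" by (auto dest: in_diffD)
    then show "case x of (A, v) \<Rightarrow> v \<notin> A"
    proof
      assume "x \<in># D" then show ?thesis using o by (cases x) auto
    next
      assume "x \<in> set (reversed_arcs s P)" then show ?thesis using rev_image(2)[OF assms] by (cases x) auto
    qed
  qed
  show ?thesis unfolding is_orientation_def using 1 2 by blast
qed

lemma Mh_list: "Mh (mset L) W = length (filter (\<lambda>v. v \<in> W) (map snd L))"
  unfolding Mh_def by (simp add: length_filter_map comp_def flip: mset_filter)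

lemma rev_Mh:
  assumes "hyperpath D s t P"
  shows "int (Mh (D - mset P + mset (reversed_arcs s P)) W) = int (Mh D W) + (if s \<in> W then 1 else 0) - (if t \<in> W then 1 else 0)"
proof -
  have sub: "mset P \<subseteq># D" using hp_sub[OF assms] .
  have ne: "P \<noteq> []" and tl: "snd (last P) = t" using assms unfolding hyperpath_def by auto
  have fs: "filter_mset (\<lambda>x. snd x \<in> W) (mset P) \<subseteq># filter_mset (\<lambda>x. snd x \<in> W) D"
    using multiset_filter_mono[OF sub] .
  have "Mh (D - mset P + mset (reversed_arcs s P)) W = Mh D W - Mh (mset P) W + Mh (mset (reversed_arcs s P)) W"
    unfolding Mh_def filter_union_mset filter_diff_mset size_union size_Diff_submset[OF fs] ..
  moreover have "Mh (mset P) W \<le> Mh D W" unfolding Mh_def using size_mset_mono[OF fs] .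
  moreover have hs: "map snd P = butlast (map snd P) @ [t]"
    using ne tl by (metis append_butlast_last_id last_map map_is_Nil_conv)
  have "int (Mh (mset P) W) = int (length (filter (\<lambda>v. v \<in> W) (butlast (map snd P)))) + (if t \<in> W then 1 else 0)"
    unfolding Mh_list by (subst hs) simp
  moreover have "int (Mh (mset (reversed_arcs s P)) W) = int (length (filter (\<lambda>v. v \<in> W) (butlast (map snd P)))) + (if s \<in> W then 1 else 0)"
    unfolding Mh_list rev_heads[OF ne] by simp
  ultimately show ?thesis by simp
qed


lemma rev_kc:
  assumes hyp: "hypergraph V E" and o: "is_orientation E D" and hp: "hyperpath D s t P"
    and kc: "k_hyperarc_connected V k D"
    and sep: "\<forall>W. W \<subseteq> V \<longrightarrow> W \<noteq> {} \<longrightarrow> W \<noteq> V \<longrightarrow> t \<in> W \<longrightarrow> s \<notin> W \<longrightarrow> Ie E W + k < Mh D W"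
  shows "k_hyperarc_connected V k (D - mset P + mset (reversed_arcs s P))"
proof -
  have o': "is_orientation E (D - mset P + mset (reversed_arcs s P))" using rev_orient[OF o hp] .
  have kcW: "\<forall>W. W \<subseteq> V \<longrightarrow> W \<noteq> {} \<longrightarrow> W \<noteq> V \<longrightarrow> Ie E W + k \<le> Mh D W" using kc_iff[OF hyp o] kc by blast
  show ?thesis unfolding kc_iff[OF hyp o']
  proof (intro allI impI)
    fix W assume W: "W \<subseteq> V" "W \<noteq> {}" "W \<noteq> V"
    have a: "Ie E W + k \<le> Mh D W" using kcW W by blast
    have b: "t \<in> W \<Longrightarrow> s \<notin> W \<Longrightarrow> Ie E W + k < Mh D W" using sep W by blast
    have c: "int (Mh (D - mset P + mset (reversed_arcs s P)) W) = int (Mh D W) + (if s \<in> W then 1 else 0) - (if t \<in> W then 1 else 0)"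
      using rev_Mh[OF hp] .
    show "Ie E W + k \<le> Mh (D - mset P + mset (reversed_arcs s P)) W"
    proof (cases "t \<in> W \<and> s \<notin> W")
      case True then show ?thesis using b c by simp
    next
      case False then show ?thesis using a c by (cases "s \<in> W"; cases "t \<in> W"; simp)
    qed
  qed
qed

lemma Mh_insert: "x \<notin> F \<Longrightarrow> Mh D (insert x F) = Mh D {x} + Mh D F"
proof -
  assume x: "x \<notin> F"
  have "filter_mset (\<lambda>y. snd y \<in> insert x F) D = filter_mset (\<lambda>y. snd y \<in> {x}) D + filter_mset (\<lambda>y. snd y \<in> F) D"
    unfolding multiset_eq_iff using x by auto
  then show ?thesis unfolding Mh_def by simp
qed

lemma Mh_sum: "finite W \<Longrightarrow> Mh D W = (\<Sum>v\<in>W. Mh D {v})"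
proof (induction W rule: finite_induct)
  case empty then show ?case unfolding Mh_def by simp
next
  case (insert x F) then show ?case using Mh_insert[of x F D] by simp
qed

lemma filter_all: "\<forall>x\<in>#D. P x \<Longrightarrow> filter_mset P D = D"
  by (induction D) auto

lemma Mh_V:
  assumes "hypergraph V E" "is_orientation E D"
  shows "Mh D V = size E"
proof -
  have "\<forall>x\<in>#D. snd x \<in> V"
  proof
    fix x assume "x \<in># D" then show "snd x \<in> V" using orient_arc_V(1)[OF assms, of "fst x" "snd x"] by simp
  qed
  then have "Mh D V = size D" unfolding Mh_def using filter_all by metis
  moreover have "size E = size D" using assms(2) unfolding is_orientation_def by (metis size_image_mset)
  ultimately show ?thesis by simp
qed

lemma Mh_modular: "Mh D W1 + Mh D W2 = Mh D (W1 \<inter> W2) + Mh D (W1 \<union> W2)"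
proof -
  have "filter_mset (\<lambda>y. snd y \<in> W1) D + filter_mset (\<lambda>y. snd y \<in> W2) D
      = filter_mset (\<lambda>y. snd y \<in> W1 \<inter> W2) D + filter_mset (\<lambda>y. snd y \<in> W1 \<union> W2) D"
    unfolding multiset_eq_iff by auto
  then show ?thesis unfolding Mh_def by (metis size_union)
qed

lemma Ie_super: "Ie E W1 + Ie E W2 \<le> Ie E (W1 \<inter> W2) + Ie E (W1 \<union> W2)"
proof (induction E)
  case empty then show ?case unfolding Ie_def by simp
next
  case (add Z E)
  have "(if Z \<subseteq> W1 then 1 else 0) + (if Z \<subseteq> W2 then 1 else 0)
     \<le> (if Z \<subseteq> W1 \<inter> W2 then 1 else 0) + (if Z \<subseteq> W1 \<union> W2 then (1::nat) else 0)"
    by auto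
  moreover have "\<And>W. Ie (add_mset Z E) W = (if Z \<subseteq> W then 1 else 0) + Ie E W" unfolding Ie_def by simp
  ultimately show ?case using add by simp
qed


lemma exchange:
  assumes hyp: "hypergraph V E" and o1: "is_orientation E D" and o2: "is_orientation E D2"
    and kc1: "k_hyperarc_connected V k D" and kc2: "k_hyperarc_connected V k D2"
    and sV: "s \<in> V" and sp: "Mh D {s} < Mh D2 {s}"
  shows "\<exists>t. Mh D2 {t} < Mh D {t} \<and>
     (\<forall>W. W \<subseteq> V \<longrightarrow> W \<noteq> {} \<longrightarrow> W \<noteq> V \<longrightarrow> t \<in> W \<longrightarrow> s \<notin> W \<longrightarrow> Ie E W + k < Mh D W)"
proof (rule ccontr)
  assume na: "\<not> ?thesis"
  have finV: "finite V" using hyp unfolding hypergraph_def by simp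
  have K1: "\<And>W. W \<subseteq> V \<Longrightarrow> W \<noteq> {} \<Longrightarrow> W \<noteq> V \<Longrightarrow> Ie E W + k \<le> Mh D W"
    using kc_iff[OF hyp o1] kc1 by blast
  have K2: "\<And>W. W \<subseteq> V \<Longrightarrow> W \<noteq> {} \<Longrightarrow> W \<noteq> V \<Longrightarrow> Ie E W + k \<le> Mh D2 W"
    using kc_iff[OF hyp o2] kc2 by blast
  define T where "T = {W. W \<subseteq> V \<and> W \<noteq> {} \<and> s \<notin> W \<and> Mh D W = Ie E W + k}"
  define phi where "phi = (\<lambda>v. int (Mh D2 {v}) - int (Mh D {v}))"
  have "T \<subseteq> Pow V" unfolding T_def by blast
  then have finT: "finite T" using finV by (simp add: finite_subset)
  have Tsub: "\<And>W. W \<in> T \<Longrightarrow> W \<subseteq> V" unfolding T_def by blast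
  have phiW: "\<And>W. W \<subseteq> V \<Longrightarrow> sum phi W = int (Mh D2 W) - int (Mh D W)"
  proof -
    fix W assume "W \<subseteq> V"
    then have fW: "finite W" using finV finite_subset by blast
    show "sum phi W = int (Mh D2 W) - int (Mh D W)"
      unfolding phi_def sum_subtractf Mh_sum[OF fW, of D] Mh_sum[OF fW, of D2] by simp
  qed
  have Tnn: "\<And>W. W \<in> T \<Longrightarrow> sum phi W \<ge> 0"
  proof -
    fix W assume W: "W \<in> T"
    then have w: "W \<subseteq> V" "W \<noteq> {}" "s \<notin> W" "Mh D W = Ie E W + k" unfolding T_def by simp_all
    have "W \<noteq> V" using w(3) sV by blast
    then have "Mh D W \<le> Mh D2 W" using K2[OF w(1,2)] w(4) by simp
    then show "sum phi W \<ge> 0" using phiW[OF \<open>W \<subseteq> V\<close>] by simp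
  qed
  have Tun: "\<And>W1 W2. W1 \<in> T \<Longrightarrow> W2 \<in> T \<Longrightarrow> W1 \<inter> W2 \<noteq> {} \<Longrightarrow> W1 \<union> W2 \<in> T"
  proof -
    fix W1 W2 assume W1: "W1 \<in> T" and W2: "W2 \<in> T" and ne: "W1 \<inter> W2 \<noteq> {}"
    have a1: "W1 \<subseteq> V" "s \<notin> W1" "Mh D W1 = Ie E W1 + k" using W1 unfolding T_def by simp_all
    have a2: "W2 \<subseteq> V" "s \<notin> W2" "Mh D W2 = Ie E W2 + k" using W2 unfolding T_def by simp_all
    have i1: "Ie E (W1 \<inter> W2) + k \<le> Mh D (W1 \<inter> W2)"
    proof (rule K1)
      show "W1 \<inter> W2 \<subseteq> V" using a1 by blast
      show "W1 \<inter> W2 \<noteq> {}" by (rule ne)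
      show "W1 \<inter> W2 \<noteq> V" using a1(2) sV by blast
    qed
    have i2: "Ie E (W1 \<union> W2) + k \<le> Mh D (W1 \<union> W2)"
    proof (rule K1)
      show "W1 \<union> W2 \<subseteq> V" using a1 a2 by blast
      show "W1 \<union> W2 \<noteq> {}" using ne by blast
      show "W1 \<union> W2 \<noteq> V" using a1(2) a2(2) sV by blast
    qed
    have "Mh D (W1 \<union> W2) = Ie E (W1 \<union> W2) + k"
      using i1 i2 a1(3) a2(3) Mh_modular[of D W1 W2] Ie_super[of E W1 W2] by linarith
    moreover have "W1 \<union> W2 \<subseteq> V" "W1 \<union> W2 \<noteq> {}" "s \<notin> W1 \<union> W2" using a1 a2 ne by blast+
    ultimately show "W1 \<union> W2 \<in> T" unfolding T_def by simp
  qed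
  have claim: "\<And>G. G \<subseteq> T \<Longrightarrow> sum phi (\<Union>G) \<ge> 0"
  proof -
    fix G0 :: "'a set set" assume "G0 \<subseteq> T"
    then show "sum phi (\<Union>G0) \<ge> 0"
    proof (induction G0 rule: measure_induct_rule[where f=card])
      case (less G)
      have finG: "finite G" using less.prems finT finite_subset by blast
      show ?case
      proof (cases "\<exists>W1\<in>G. \<exists>W2\<in>G. W1 \<noteq> W2 \<and> W1 \<inter> W2 \<noteq> {}")
        case True
        then obtain W1 W2 where w: "W1 \<in> G" "W2 \<in> G" "W1 \<noteq> W2" "W1 \<inter> W2 \<noteq> {}" by blast
        define G' where "G' = insert (W1 \<union> W2) (G - {W1, W2})"
        have "W1 \<union> W2 \<in> T" using Tun w less.prems by blast
        then have sub: "G' \<subseteq> T" unfolding G'_def using less.prems by blast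
        have "card (G - {W1, W2}) = card G - 2" using w finG by (simp add: card_Diff_subset)
        moreover have "card G \<ge> 2"
        proof -
          have "{W1, W2} \<subseteq> G" using w by simp
          then have "card {W1, W2} \<le> card G" using finG by (rule card_mono[rotated])
          then show ?thesis using w(3) by simp
        qed
        moreover have "card G' \<le> Suc (card (G - {W1, W2}))" unfolding G'_def using finG by (simp add: card_insert_if)
        ultimately have "card G' < card G" by linarith
        moreover have "\<Union>G' = \<Union>G" unfolding G'_def using w by blast
        ultimately show ?thesis using less.IH[OF _ sub] by simp
      next
        case False
        have fin: "\<forall>A\<in>G. finite A" using less.prems Tsub finV finite_subset by blast
        have dis: "\<forall>A\<in>G. \<forall>B\<in>G. A \<noteq> B \<longrightarrow> A \<inter> B = {}" using False by blast
        have "sum phi (\<Union>G) = (sum \<circ> sum) phi G" by (rule sum.Union_disjoint[OF fin dis])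
        also have "\<dots> = sum (sum phi) G" by simp
        finally have eq: "sum phi (\<Union>G) = sum (sum phi) G" .
        have "sum (sum phi) G \<ge> 0"
        proof (rule sum_nonneg)
          fix W assume "W \<in> G" then show "0 \<le> sum phi W" using Tnn less.prems by blast
        qed
        then show ?thesis using eq by simp
      qed
    qed
  qed
  define U where "U = \<Union>T"
  have U0: "sum phi U \<ge> 0" unfolding U_def using claim by blast
  have UV: "U \<subseteq> V" unfolding U_def using Tsub by blast
  have sU: "s \<notin> U" unfolding U_def T_def by blast
  have negU: "\<And>v. v \<in> V \<Longrightarrow> v \<notin> U \<Longrightarrow> phi v \<ge> 0"
  proof (rule ccontr)
    fix v assume v: "v \<in> V" "v \<notin> U" "\<not> phi v \<ge> 0"
    then have lt: "Mh D2 {v} < Mh D {v}" unfolding phi_def by simp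
    then obtain W where W: "W \<subseteq> V" "W \<noteq> {}" "W \<noteq> V" "v \<in> W" "s \<notin> W" "\<not> Ie E W + k < Mh D W"
      using na by blast
    then have "Mh D W = Ie E W + k" using K1[OF W(1-3)] by simp
    then have "W \<in> T" unfolding T_def using W by blast
    then show False using v W(4) unfolding U_def by blast
  qed
  have pos: "sum phi (V - U) > 0"
  proof -
    have "phi s \<le> sum phi (V - U)"
      by (rule member_le_sum) (use sV sU negU finV in auto)
    moreover have "phi s > 0" using sp unfolding phi_def by simp
    ultimately show ?thesis by simp
  qed
  have tot: "sum phi V = 0" using phiW[of V] Mh_V[OF hyp o1] Mh_V[OF hyp o2] by simp
  have "sum phi V = sum phi (V - U) + sum phi U" using sum.subset_diff[OF UV finV] .
  then show False using tot pos U0 by simp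
qed


lemma hp_take:
  assumes "hyperpath D s t P" "0 < j" "j \<le> length P"
  shows "hyperpath D s (snd (P ! (j - 1))) (take j P)"
proof -
  have h: "P \<noteq> []" "set P \<subseteq> set_mset D" "s \<in> fst (P ! 0)"
    "\<forall>i. i + 1 < length P \<longrightarrow> snd (P ! i) \<in> fst (P ! (i + 1))" "distinct (map snd P)"
    using assms(1) unfolding hyperpath_def by blast+
  have ne: "take j P \<noteq> []" using assms(2) h(1) by simp
  have l: "last (take j P) = P ! (j - 1)"
    using last_conv_nth[OF ne] assms(2,3) by simp
  show ?thesis unfolding hyperpath_def
  proof (intro conjI)
    show "take j P \<noteq> []" using assms(2) h(1) by simp
    show "set (take j P) \<subseteq> set_mset D" using h(2) set_take_subset by fast
    show "s \<in> fst (take j P ! 0)" using h(3) assms(2) by simp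
    show "snd (last (take j P)) = snd (P ! (j - 1))" using l by simp
    show "\<forall>i. i + 1 < length (take j P) \<longrightarrow> snd (take j P ! i) \<in> fst (take j P ! (i + 1))"
      using h(4) by simp
    show "distinct (map snd (take j P))" using h(5) by (simp add: take_map[symmetric])
  qed
qed

lemma hp_snoc:
  assumes "hyperpath D s u P" "(Y, w) \<in># D" "u \<in> Y" "w \<notin> set (map snd P)"
  shows "hyperpath D s w (P @ [(Y, w)])"
proof -
  have h: "P \<noteq> []" "set P \<subseteq> set_mset D" "s \<in> fst (P ! 0)" "snd (last P) = u"
    "\<forall>i. i + 1 < length P \<longrightarrow> snd (P ! i) \<in> fst (P ! (i + 1))" "distinct (map snd P)"
    using assms(1) unfolding hyperpath_def by blast+
  show ?thesis unfolding hyperpath_def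
  proof (intro conjI allI impI)
    show "P @ [(Y, w)] \<noteq> []" by simp
    show "set (P @ [(Y, w)]) \<subseteq> set_mset D" using h(2) assms(2) by simp
    show "s \<in> fst ((P @ [(Y, w)]) ! 0)" using h(1,3) by (simp add: nth_append)
    show "snd (last (P @ [(Y, w)])) = w" by simp
    show "distinct (map snd (P @ [(Y, w)]))" using h(6) assms(4) by simp
    fix i assume i: "i + 1 < length (P @ [(Y, w)])"
    show "snd ((P @ [(Y, w)]) ! i) \<in> fst ((P @ [(Y, w)]) ! (i + 1))"
    proof (cases "i + 1 < length P")
      case True then show ?thesis using h(5) by (simp add: nth_append)
    next
      case False
      then have ii: "i + 1 = length P" using i by simp
      then have "P ! i = last P" using h(1) by (simp add: last_conv_nth ii[symmetric])
      then show ?thesis using ii h(4) assms(3) by (simp add: nth_append)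
    qed
  qed
qed

lemma hp_single:
  assumes "(Y, w) \<in># D" "s \<in> Y"
  shows "hyperpath D s w [(Y, w)]"
  using assms unfolding hyperpath_def by simp

lemma hp_last_V:
  assumes "hypergraph V E" "is_orientation E D" "hyperpath D s t P"
  shows "t \<in> V"
proof -
  have "P \<noteq> []" "set P \<subseteq> set_mset D" "snd (last P) = t" using assms(3) unfolding hyperpath_def by blast+
  then have "last P \<in># D" by auto
  moreover obtain A v where "last P = (A, v)" by (cases "last P")
  ultimately show ?thesis using orient_arc_V(1)[OF assms(1,2), of A v] \<open>snd (last P) = t\<close> by simp
qed

lemma hp_exists:
  assumes hyp: "hypergraph V E" and o: "is_orientation E D" and kc: "k_hyperarc_connected V k D"
    and k: "k \<ge> 1" and s: "s \<in> V" and t: "t \<in> V" and st: "s \<noteq> t"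
  shows "\<exists>P. hyperpath D s t P"
proof (rule ccontr)
  assume nt: "\<nexists>P. hyperpath D s t P"
  define R where "R = {v. \<exists>P. hyperpath D s v P}"
  define X where "X = insert s R"
  have RV: "R \<subseteq> V" unfolding R_def using hp_last_V[OF hyp o] by blast
  have tX: "t \<notin> X" unfolding X_def R_def using nt st by blast
  have X1: "X \<noteq> {}" unfolding X_def by simp
  have X2: "X \<subset> V" using RV s t tX unfolding X_def by blast
  have "out_degree D X \<ge> k" using kc X1 X2 unfolding k_hyperarc_connected_def by simp
  then have "out_degree D X \<noteq> 0" using k by simp
  then have "{#(Y, v) \<in># D. v \<notin> X \<and> Y \<inter> X \<noteq> {}#} \<noteq> {#}" unfolding out_degree_def by (metis size_empty)
  then obtain x where x: "x \<in># {#(Y, v) \<in># D. v \<notin> X \<and> Y \<inter> X \<noteq> {}#}" by (meson multiset_nonemptyE)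
  obtain Y w where "x = (Y, w)" by (cases x)
  then have Yw: "(Y, w) \<in># D" "w \<notin> X" "Y \<inter> X \<noteq> {}" using x by simp_all
  then obtain u where u: "u \<in> Y" "u \<in> X" by blast
  have "w \<in> R"
  proof (cases "u = s")
    case True then show ?thesis unfolding R_def using hp_single[OF Yw(1)] u(1) by blast
  next
    case False
    then have "u \<in> R" using u(2) unfolding X_def by blast
    then obtain P where P: "hyperpath D s u P" unfolding R_def by blast
    have "w \<notin> set (map snd P)"
    proof
      assume "w \<in> set (map snd P)"
      then obtain i where i: "i < length P" "w = snd (P ! i)" by (auto simp: in_set_conv_nth)
      have "hyperpath D s (snd (P ! (Suc i - 1))) (take (Suc i) P)" using hp_take[OF P, of "Suc i"] i by simp
      then have "w \<in> R" unfolding R_def using i by auto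
      then show False using Yw(2) unfolding X_def by blast
    qed
    then show ?thesis unfolding R_def using hp_snoc[OF P Yw(1) u(1)] by blast
  qed
  then show False using Yw(2) unfolding X_def by blast
qed


lemma cycle_fun:
  assumes fin: "finite H" and ne: "v0 \<in> H" and cl: "\<And>v. v \<in> H \<Longrightarrow> f v \<in> H"
  shows "\<exists>v n. v \<in> H \<and> 0 < n \<and> (f ^^ n) v = v \<and>
     (\<forall>a b. a < b \<and> b \<le> n \<and> (f ^^ a) v = (f ^^ b) v \<longrightarrow> a = 0 \<and> b = n)"
proof -
  define x where "x = (\<lambda>m. (f ^^ m) v0)"
  have xH: "\<And>m. x m \<in> H"
  proof -
    fix m show "x m \<in> H" unfolding x_def by (induction m) (use ne cl in auto)
  qed
  have "x ` {0..card H} \<subseteq> H" using xH by blast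
  then have "card (x ` {0..card H}) \<le> card H" using fin by (simp add: card_mono)
  then have "\<not> inj_on x {0..card H}" using card_image by fastforce
  then obtain i j where ij: "i \<noteq> j" "x i = x j" unfolding inj_on_def by blast
  define Pd where "Pd = (\<lambda>d. 0 < d \<and> (\<exists>i. x i = x (i + d)))"
  have ex: "\<exists>d. Pd d"
  proof (cases "i < j")
    case True then show ?thesis unfolding Pd_def using ij by (intro exI[of _ "j - i"]) (auto intro!: exI[of _ i])
  next
    case False then show ?thesis unfolding Pd_def using ij by (intro exI[of _ "i - j"]) (auto intro!: exI[of _ j])
  qed
  define n where "n = (LEAST d. Pd d)"
  have Pn: "Pd n" unfolding n_def using ex by (rule LeastI_ex)
  then obtain i0 where n0: "0 < n" and i0: "x i0 = x (i0 + n)" unfolding Pd_def by blast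
  have mn: "\<And>d. Pd d \<Longrightarrow> n \<le> d" unfolding n_def by (rule Least_le)
  define v where "v = x i0"
  have fv: "\<And>m. (f ^^ m) v = x (i0 + m)" unfolding v_def x_def by (simp add: funpow_add add.commute)
  show ?thesis
  proof (intro exI conjI allI impI)
    show "v \<in> H" unfolding v_def using xH by simp
    show "0 < n" by (rule n0)
    show "(f ^^ n) v = v" using fv i0 unfolding v_def by simp
    fix a b assume ab: "a < b \<and> b \<le> n \<and> (f ^^ a) v = (f ^^ b) v"
    then have "x (i0 + a) = x (i0 + a + (b - a))" using fv by simp
    then have "Pd (b - a)" unfolding Pd_def using ab by (auto intro!: exI[of _ "i0 + a"])
    then have "n \<le> b - a" by (rule mn)
    then show "a = 0" "b = n" using ab by auto
  qed
qed

lemma diff_decrease: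
  assumes "mset P \<subseteq># D - D2" "mset P' \<subseteq># D2 - D" "P \<noteq> []"
  shows "size (D - mset P + mset P' - D2) < size (D - D2)"
proof -
  have e1: "D - mset P + mset P' - D2 = (D - D2) - mset P"
  proof (subst multiset_eq_iff, intro allI)
    fix x
    have a: "count (mset P) x \<le> count D x - count D2 x" using assms(1) unfolding subseteq_mset_def by (metis count_diff)
    have b: "count (mset P') x \<le> count D2 x - count D x" using assms(2) unfolding subseteq_mset_def by (metis count_diff)
    show "count (D - mset P + mset P' - D2) x = count (D - D2 - mset P) x"
      using a b by simp
  qed
  have e2: "size (D - D2 - mset P) = size (D - D2) - size (mset P)" using assms(1) by (rule size_Diff_submset)
  have e3: "size (mset P) > 0" using assms(3) by simp
  have e4: "size (mset P) \<le> size (D - D2)" using assms(1) by (rule size_mset_mono)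
  have "size (D - D2 - mset P) < size (D - D2)" unfolding e2 using e3 e4 by linarith
  then show ?thesis unfolding e1 .
qed

lemma split_inter: "D = (D - D2) + (D \<inter># D2)"
  unfolding multiset_eq_iff by (simp add: min_def)


lemma cycle_exists:
  assumes hyp: "hypergraph V E" and o1: "is_orientation E D" and o2: "is_orientation E D2"
    and eq: "\<forall>v. Mh D {v} = Mh D2 {v}" and ne: "D \<noteq> D2"
  shows "\<exists>s P. hyperpath D s s P \<and> mset P \<subseteq># D - D2 \<and> mset (reversed_arcs s P) \<subseteq># D2 - D"
proof -
  define g :: "'a hyperarc \<Rightarrow> 'a set" where "g = (\<lambda>(A, v). insert v A)"
  define A1 where "A1 = D - D2"
  define A2 where "A2 = D2 - D"
  define I where "I = D \<inter># D2"
  have D1s: "D = A1 + I" unfolding A1_def I_def by (rule split_inter)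
  have D2s: "D2 = A2 + I" unfolding A2_def I_def using split_inter[of D2 D] by (simp add: subset_mset.inf_commute)
  have gD: "image_mset g D = E" "image_mset g D2 = E" using o1 o2 unfolding is_orientation_def g_def by simp_all
  have img: "image_mset g A1 = image_mset g A2"
  proof -
    have "image_mset g A1 + image_mset g I = image_mset g A2 + image_mset g I"
      using gD D1s D2s by (metis image_mset_union)
    then show ?thesis by simp
  qed
  have MhA: "\<And>w. Mh A1 {w} = Mh A2 {w}"
  proof -
    fix w
    have "Mh D {w} = Mh A1 {w} + Mh I {w}" "Mh D2 {w} = Mh A2 {w} + Mh I {w}"
      unfolding Mh_def by (subst D1s, simp, subst D2s, simp)
    then show "Mh A1 {w} = Mh A2 {w}" using eq by simp
  qed
  have disj: "\<And>x. x \<in># A1 \<Longrightarrow> x \<notin># A2" unfolding A1_def A2_def by (simp add: in_diff_count)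
  have A2ne: "A2 \<noteq> {#}"
  proof
    assume "A2 = {#}"
    then have "image_mset g A1 = {#}" using img by simp
    then have "A1 = {#}" by simp
    then show False using D1s D2s \<open>A2 = {#}\<close> ne by simp
  qed
  have inD: "\<And>x. x \<in># A1 \<Longrightarrow> x \<in># D" unfolding A1_def by (rule in_diffD)
  have inD2: "\<And>x. x \<in># A2 \<Longrightarrow> x \<in># D2" unfolding A2_def by (rule in_diffD)
  define H where "H = snd ` set_mset A2"
  have finH: "finite H" unfolding H_def by simp
  define Q where "Q = (\<lambda>v z. case z of (A, B, w) \<Rightarrow> (A, v) \<in># A2 \<and> (B, w) \<in># A1 \<and> insert v A = insert w B \<and> w \<in> H)"
  have succ: "\<And>v. v \<in> H \<Longrightarrow> \<exists>z. Q v z"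
  proof -
    fix v assume "v \<in> H"
    then obtain A where A: "(A, v) \<in># A2" unfolding H_def by force
    then have "g (A, v) \<in> g ` set_mset A2" by blast
    then have "g (A, v) \<in> g ` set_mset A1" using img by (metis set_image_mset)
    then obtain x where x: "x \<in># A1" "g x = g (A, v)" by blast
    obtain B w where xe: "x = (B, w)" by (cases x)
    have "x \<in># filter_mset (\<lambda>y. snd y \<in> {w}) A1" using x xe by simp
    then have "Mh A1 {w} \<noteq> 0" unfolding Mh_def by (metis empty_iff set_mset_empty size_eq_0_iff_empty)
    then have "Mh A2 {w} \<noteq> 0" using MhA by simp
    then have "filter_mset (\<lambda>y. snd y \<in> {w}) A2 \<noteq> {#}" unfolding Mh_def by (metis size_empty)
    then obtain y where "y \<in># filter_mset (\<lambda>y. snd y \<in> {w}) A2" by (meson multiset_nonemptyE)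
    then have "w \<in> H" unfolding H_def by force
    then have "Q v (A, B, w)" unfolding Q_def using A x xe g_def by simp
    then show "\<exists>z. Q v z" by blast
  qed
  define sel where "sel = (\<lambda>v. SOME z. Q v z)"
  have selQ: "\<And>v. v \<in> H \<Longrightarrow> Q v (sel v)" unfolding sel_def using succ by (metis someI_ex)
  define f where "f = (\<lambda>v. snd (snd (sel v)))"
  have fH: "\<And>v. v \<in> H \<Longrightarrow> f v \<in> H"
  proof -
    fix v assume "v \<in> H"
    then have "Q v (sel v)" by (rule selQ)
    then show "f v \<in> H" unfolding Q_def f_def by (cases "sel v") auto
  qed
  obtain x0 where "x0 \<in># A2" using A2ne by (meson multiset_nonemptyE)
  then have h0: "snd x0 \<in> H" unfolding H_def by (rule imageI)
  have "\<exists>v n. v \<in> H \<and> 0 < n \<and> (f ^^ n) v = v \<and>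
     (\<forall>a b. a < b \<and> b \<le> n \<and> (f ^^ a) v = (f ^^ b) v \<longrightarrow> a = 0 \<and> b = n)"
    by (rule cycle_fun[OF finH h0 fH])
  then obtain v0 n where cyc: "v0 \<in> H" "0 < n" "(f ^^ n) v0 = v0"
    "\<forall>a b. a < b \<and> b \<le> n \<and> (f ^^ a) v0 = (f ^^ b) v0 \<longrightarrow> a = 0 \<and> b = n"
    by metis
  define y where "y = (\<lambda>j. (f ^^ j) v0)"
  have yH: "\<And>j. y j \<in> H"
  proof -
    fix j show "y j \<in> H" unfolding y_def by (induction j) (use cyc(1) fH in auto)
  qed
  define Aj where "Aj = (\<lambda>j. fst (sel (y j)))"
  define Bj where "Bj = (\<lambda>j. fst (snd (sel (y j))))"
  have ySuc: "\<And>j. y (Suc j) = snd (snd (sel (y j)))" unfolding y_def f_def by simp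
  have arc: "\<And>j. (Aj j, y j) \<in># A2 \<and> (Bj j, y (Suc j)) \<in># A1 \<and> insert (y j) (Aj j) = insert (y (Suc j)) (Bj j)"
  proof -
    fix j
    have "Q (y j) (sel (y j))" using selQ yH by blast
    then show "(Aj j, y j) \<in># A2 \<and> (Bj j, y (Suc j)) \<in># A1 \<and> insert (y j) (Aj j) = insert (y (Suc j)) (Bj j)"
      unfolding Q_def Aj_def Bj_def ySuc by (cases "sel (y j)") auto
  qed
  have arc2: "\<And>j. y j \<in> Bj j \<and> Aj j = (Bj j - {y j}) \<union> {y (Suc j)} \<and> y j \<noteq> y (Suc j)"
  proof -
    fix j
    have a: "(Aj j, y j) \<in># A2" "(Bj j, y (Suc j)) \<in># A1" "insert (y j) (Aj j) = insert (y (Suc j)) (Bj j)"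
      using arc[of j] by blast+
    have n1: "y j \<notin> Aj j" using orient_arc(1)[OF o2 inD2[OF a(1)]] .
    have n2: "y (Suc j) \<notin> Bj j" using orient_arc(1)[OF o1 inD[OF a(2)]] .
    have ne: "y j \<noteq> y (Suc j)"
    proof
      assume e: "y j = y (Suc j)"
      then have "Aj j = Bj j" using a(3) n1 n2
        by (metis insert_ident)
      then show False using a(1,2) e disj by metis
    qed
    have "y j \<in> Bj j" using a(3) ne by (metis insertE insertI1)
    moreover have "Aj j = (Bj j - {y j}) \<union> {y (Suc j)}"
    proof -
      have "Aj j = insert (y j) (Aj j) - {y j}" using n1 by simp
      also have "\<dots> = insert (y (Suc j)) (Bj j) - {y j}" using a(3) by simp
      also have "\<dots> = (Bj j - {y j}) \<union> {y (Suc j)}" using ne by blast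
      finally show ?thesis .
    qed
    ultimately show "y j \<in> Bj j \<and> Aj j = (Bj j - {y j}) \<union> {y (Suc j)} \<and> y j \<noteq> y (Suc j)" using ne by blast
  qed
  define P where "P = map (\<lambda>j. (Bj j, y (Suc j))) [0..<n]"
  have lenP: "length P = n" unfolding P_def by simp
  have Pnth: "\<And>j. j < n \<Longrightarrow> P ! j = (Bj j, y (Suc j))" unfolding P_def by simp
  have y0: "y 0 = v0" unfolding y_def by simp
  have yn: "y n = v0" unfolding y_def using cyc(3) .
  have cy: "\<And>a b. a < b \<Longrightarrow> b \<le> n \<Longrightarrow> y a = y b \<Longrightarrow> a = 0 \<and> b = n"
    using cyc(4) unfolding y_def by blast
  have dh: "distinct (map snd P)"
  proof -
    have "map snd P = map (\<lambda>j. y (Suc j)) [0..<n]" unfolding P_def by simp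
    moreover have "inj_on (\<lambda>j. y (Suc j)) (set [0..<n])"
    proof (rule inj_onI)
      fix a b assume ab: "a \<in> set [0..<n]" "b \<in> set [0..<n]" "y (Suc a) = y (Suc b)"
      show "a = b"
      proof (rule ccontr)
        assume "a \<noteq> b"
        then consider "a < b" | "b < a" by linarith
        then show False
        proof cases
          case 1 then show False using cy[of "Suc a" "Suc b"] ab by simp
        next
          case 2 then show False using cy[of "Suc b" "Suc a"] ab by simp
        qed
      qed
    qed
    ultimately show ?thesis by (simp add: distinct_map)
  qed
  have hp: "hyperpath D v0 v0 P" unfolding hyperpath_def
  proof (intro conjI allI impI)
    show "P \<noteq> []" using lenP cyc(2) by auto
    show "set P \<subseteq> set_mset D"
    proof
      fix x assume "x \<in> set P"
      then obtain j where "j < n" "x = (Bj j, y (Suc j))" unfolding P_def by auto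
      then show "x \<in># D" using arc[of j] inD by blast
    qed
    show "v0 \<in> fst (P ! 0)" using Pnth[OF cyc(2)] arc2[of 0] y0 by simp
    show "snd (last P) = v0"
    proof -
      have "last P = P ! (n - 1)" using lenP cyc(2) \<open>P \<noteq> []\<close> by (simp add: last_conv_nth)
      then show ?thesis using Pnth[of "n - 1"] cyc(2) yn by simp
    qed
    show "distinct (map snd P)" by (rule dh)
    fix i assume "i + 1 < length P"
    then have i: "i < n" "Suc i < n" using lenP by simp_all
    show "snd (P ! i) \<in> fst (P ! (i + 1))" using Pnth[OF i(1)] Pnth[OF i(2)] arc2[of "Suc i"] by simp
  qed
  define P' where "P' = map (\<lambda>j. (Aj j, y j)) [0..<n]"
  have rv: "reversed_arcs v0 P = P'"
  proof (rule nth_equalityI)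
    show "length (reversed_arcs v0 P) = length P'" unfolding P'_def by (simp add: rev_len lenP)
    fix j assume "j < length (reversed_arcs v0 P)"
    then have j: "j < n" by (simp add: rev_len lenP)
    have pj: "prv v0 P j = y j"
    proof (cases j)
      case 0 then show ?thesis unfolding prv_def using y0 by simp
    next
      case (Suc j') then show ?thesis unfolding prv_def using Pnth[of j'] j lenP by simp
    qed
    show "reversed_arcs v0 P ! j = P' ! j"
      using rev_nth[of j P v0] lenP j pj Pnth[OF j] arc2[of j] unfolding P'_def by simp
  qed
  have dP: "distinct P" using dh distinct_map by blast
  have sub1: "mset P \<subseteq># D - D2"
  proof (rule distinct_mset_sub[OF dP])
    show "set P \<subseteq> set_mset (D - D2)"
    proof
      fix x assume "x \<in> set P"
      then obtain j where "j < n" "x = (Bj j, y (Suc j))" unfolding P_def by auto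
      then show "x \<in># D - D2" using arc[of j] unfolding A1_def by blast
    qed
  qed
  have dP': "distinct P'"
  proof -
    have "inj_on y (set [0..<n])"
    proof (rule inj_onI)
      fix a b assume ab: "a \<in> set [0..<n]" "b \<in> set [0..<n]" "y a = y b"
      show "a = b"
      proof (rule ccontr)
        assume "a \<noteq> b"
        then consider "a < b" | "b < a" by linarith
        then show False
        proof cases
          case 1 then show False using cy[of a b] ab by simp
        next
          case 2 then show False using cy[of b a] ab by simp
        qed
      qed
    qed
    then have "distinct (map snd P')" unfolding P'_def by (simp add: distinct_map comp_def)
    then show ?thesis using distinct_map by blast
  qed
  have sub2: "mset P' \<subseteq># D2 - D"
  proof (rule distinct_mset_sub[OF dP'])
    show "set P' \<subseteq> set_mset (D2 - D)"
    proof
      fix x assume "x \<in> set P'"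
      then obtain j where "j < n" "x = (Aj j, y j)" unfolding P'_def by auto
      then show "x \<in># D2 - D" using arc[of j] unfolding A2_def by blast
    qed
  qed
  show ?thesis using hp sub1 sub2 rv by blast
qed


lemma pair_exists:
  assumes o1: "is_orientation E D" and o2: "is_orientation E D2" and ne: "D \<noteq> D2"
  shows "\<exists>s P. hyperpath D s (snd (hd P)) P \<and> mset P \<subseteq># D - D2 \<and> mset (reversed_arcs s P) \<subseteq># D2 - D"
proof -
  define g :: "'a hyperarc \<Rightarrow> 'a set" where "g = (\<lambda>(A, v). insert v A)"
  define A1 where "A1 = D - D2"
  define A2 where "A2 = D2 - D"
  define I where "I = D \<inter># D2"
  have D1s: "D = A1 + I" unfolding A1_def I_def by (rule split_inter)
  have D2s: "D2 = A2 + I" unfolding A2_def I_def using split_inter[of D2 D] by (simp add: subset_mset.inf_commute)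
  have gD: "image_mset g D = E" "image_mset g D2 = E" using o1 o2 unfolding is_orientation_def g_def by simp_all
  have img: "image_mset g A1 = image_mset g A2"
  proof -
    have "image_mset g A1 + image_mset g I = image_mset g A2 + image_mset g I"
      using gD D1s D2s by (metis image_mset_union)
    then show ?thesis by simp
  qed
  have disj: "\<And>x. x \<in># A1 \<Longrightarrow> x \<notin># A2" unfolding A1_def A2_def by (simp add: in_diff_count)
  have A2ne: "A2 \<noteq> {#}"
  proof
    assume "A2 = {#}"
    then have "image_mset g A1 = {#}" using img by simp
    then have "A1 = {#}" by simp
    then show False using D1s D2s \<open>A2 = {#}\<close> ne by simp
  qed
  obtain x0 where x0: "x0 \<in># A2" using A2ne by (meson multiset_nonemptyE)
  obtain A v where Av: "x0 = (A, v)" by (cases x0)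
  have A: "(A, v) \<in># A2" using x0 Av by simp
  then have "g (A, v) \<in> g ` set_mset A2" by blast
  then have "g (A, v) \<in> g ` set_mset A1" using img by (metis set_image_mset)
  then obtain x where x: "x \<in># A1" "g x = g (A, v)" by blast
  obtain B w where xe: "x = (B, w)" by (cases x)
  have B: "(B, w) \<in># A1" using x xe by simp
  have ins: "insert v A = insert w B" using x xe unfolding g_def by simp
  have n1: "v \<notin> A" using orient_arc(1)[OF o2 in_diffD[OF A[unfolded A2_def]]] .
  have n2: "w \<notin> B" using orient_arc(1)[OF o1 in_diffD[OF B[unfolded A1_def]]] .
  have vw: "v \<noteq> w"
  proof
    assume e: "v = w"
    then have "A = B" using ins n1 n2 by (metis insert_ident)
    then show False using A B e disj by metis
  qed
  have vB: "v \<in> B" using ins vw by (metis insertE insertI1)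
  have AB: "A = (B - {v}) \<union> {w}"
  proof -
    have "A = insert v A - {v}" using n1 by simp
    also have "\<dots> = insert w B - {v}" using ins by simp
    also have "\<dots> = (B - {v}) \<union> {w}" using vw by blast
    finally show ?thesis .
  qed
  have hp: "hyperpath D v w [(B, w)]" using hp_single[OF in_diffD[OF B[unfolded A1_def]] vB] .
  have rv: "reversed_arcs v [(B, w)] = [(A, v)]" unfolding reversed_arcs_def using AB by simp
  have s1: "mset [(B, w)] \<subseteq># D - D2" using B unfolding A1_def by simp
  have s2: "mset [(A, v)] \<subseteq># D2 - D" using A unfolding A2_def by simp
  show ?thesis using hp s1 s2 rv by (intro exI[of _ v] exI[of _ "[(B, w)]"]) simp
qed

lemma Mh_out:
  assumes "hypergraph V E" "is_orientation E D" "v \<notin> V"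
  shows "Mh D {v} = 0"
proof (rule ccontr)
  assume "Mh D {v} \<noteq> 0"
  then have "filter_mset (\<lambda>y. snd y \<in> {v}) D \<noteq> {#}" unfolding Mh_def by (metis size_empty)
  then obtain y where y: "y \<in># filter_mset (\<lambda>y. snd y \<in> {v}) D" by (meson multiset_nonemptyE)
  have yD: "y \<in># D" "snd y = v" using y by simp_all
  obtain A u where yAu: "y = (A, u)" by (cases y)
  have "(A, u) \<in># D" using yD(1) yAu by simp
  then have "u \<in> V" using orient_arc_V(1)[OF assms(1,2)] by blast
  then show False using yD(2) yAu assms(3) by simp
qed

lemma kc0: "k_hyperarc_connected V 0 D"
  unfolding k_hyperarc_connected_def by simp

lemma size_orient: "is_orientation E D \<Longrightarrow> size D = size E"
  unfolding is_orientation_def by (metis size_image_mset)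

locale setting =
  fixes V :: "'v set" and E :: "'v set multiset" and k :: nat and D2 :: "'v hyperarc multiset"
  assumes hyp: "hypergraph V E" and o2: "is_orientation E D2" and kc2: "k_hyperarc_connected V k D2"
begin

definition mu :: "'v hyperarc multiset \<Rightarrow> nat" where
  "mu D = (\<Sum>v\<in>V. nat \<bar>int (Mh D {v}) - int (Mh D2 {v})\<bar>)"

definition meas :: "'v hyperarc multiset \<Rightarrow> nat" where
  "meas D = (if k = 0 then size (D - D2) else mu D * (size E + 1) + size (D - D2))"

lemma finV: "finite V" using hyp unfolding hypergraph_def by simp

lemma mu_int: "int (mu D) = (\<Sum>v\<in>V. \<bar>int (Mh D {v}) - int (Mh D2 {v})\<bar>)"
  unfolding mu_def by simp

lemma step:
  assumes o: "is_orientation E D" and kc: "k_hyperarc_connected V k D" and ne: "D \<noteq> D2"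
  shows "\<exists>D'. reverse_step D D' \<and> is_orientation E D' \<and> k_hyperarc_connected V k D' \<and> meas D' < meas D"
proof (cases "k = 0")
  case True
  obtain s P where hp: "hyperpath D s (snd (hd P)) P" and s1: "mset P \<subseteq># D - D2" and s2: "mset (reversed_arcs s P) \<subseteq># D2 - D"
    using pair_exists[OF o o2 ne] by metis
  define D' where "D' = D - mset P + mset (reversed_arcs s P)"
  have rs: "reverse_step D D'" unfolding reverse_step_def D'_def using hp by blast
  have o': "is_orientation E D'" unfolding D'_def by (rule rev_orient[OF o hp])
  have kc': "k_hyperarc_connected V k D'" using True kc0 by simp
  have Pne: "P \<noteq> []" using hp unfolding hyperpath_def by simp
  have "size (D' - D2) < size (D - D2)" unfolding D'_def by (rule diff_decrease[OF s1 s2 Pne])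
  then have "meas D' < meas D" unfolding meas_def using True by simp
  then show ?thesis using rs o' kc' by blast
next
  case False
  then have k1: "k \<ge> 1" by simp
  show ?thesis
  proof (cases "mu D = 0")
    case True
    have eqV: "\<And>v. v \<in> V \<Longrightarrow> Mh D {v} = Mh D2 {v}"
    proof -
      fix v assume v: "v \<in> V"
      have "(\<Sum>v\<in>V. nat \<bar>int (Mh D {v}) - int (Mh D2 {v})\<bar>) = 0" using True unfolding mu_def .
      then have "nat \<bar>int (Mh D {v}) - int (Mh D2 {v})\<bar> = 0" using finV v by simp
      then show "Mh D {v} = Mh D2 {v}" by simp
    qed
    have eq: "\<forall>v. Mh D {v} = Mh D2 {v}"
    proof
      fix v show "Mh D {v} = Mh D2 {v}"
      proof (cases "v \<in> V")
        case True then show ?thesis by (rule eqV)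
      next
        case False then show ?thesis using Mh_out[OF hyp o False] Mh_out[OF hyp o2 False] by simp
      qed
    qed
    obtain s P where hp: "hyperpath D s s P" and s1: "mset P \<subseteq># D - D2" and s2: "mset (reversed_arcs s P) \<subseteq># D2 - D"
      using cycle_exists[OF hyp o o2 eq ne] by metis
    define D' where "D' = D - mset P + mset (reversed_arcs s P)"
    have rs: "reverse_step D D'" unfolding reverse_step_def D'_def using hp by blast
    have o': "is_orientation E D'" unfolding D'_def by (rule rev_orient[OF o hp])
    have kc': "k_hyperarc_connected V k D'" unfolding D'_def
      by (rule rev_kc[OF hyp o hp kc]) blast
    have "\<And>v. int (Mh D' {v}) = int (Mh D {v})" unfolding D'_def using rev_Mh[OF hp] by simp
    then have "mu D' = mu D" unfolding mu_def by simp
    moreover have Pne: "P \<noteq> []" using hp unfolding hyperpath_def by simp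
    have "size (D' - D2) < size (D - D2)" unfolding D'_def by (rule diff_decrease[OF s1 s2 Pne])
    ultimately have "meas D' < meas D" unfolding meas_def using False True by simp
    then show ?thesis using rs o' kc' by blast
  next
    case mupos: False
    then obtain v0 where v0: "v0 \<in> V" "Mh D {v0} \<noteq> Mh D2 {v0}" unfolding mu_def
      by (metis (no_types, lifting) diff_self abs_zero nat_0 sum.neutral)
    have sumD: "(\<Sum>v\<in>V. Mh D {v}) = size E" using Mh_sum[OF finV, of D] Mh_V[OF hyp o] by simp
    have sumD2: "(\<Sum>v\<in>V. Mh D2 {v}) = size E" using Mh_sum[OF finV, of D2] Mh_V[OF hyp o2] by simp
    have "\<exists>s\<in>V. Mh D {s} < Mh D2 {s}"
    proof (rule ccontr)
      assume "\<not> (\<exists>s\<in>V. Mh D {s} < Mh D2 {s})"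
      then have le: "\<forall>v\<in>V. Mh D2 {v} \<le> Mh D {v}" by (simp add: not_less)
      then have "\<exists>a\<in>V. Mh D2 {a} < Mh D {a}" using v0 by (metis le_neq_implies_less)
      then have "(\<Sum>v\<in>V. Mh D2 {v}) < (\<Sum>v\<in>V. Mh D {v})" using sum_strict_mono_ex1[OF finV le] by blast
      then show False using sumD sumD2 by simp
    qed
    then obtain s where sV: "s \<in> V" and sp: "Mh D {s} < Mh D2 {s}" by blast
    obtain t where tn: "Mh D2 {t} < Mh D {t}" and sep: "\<forall>W. W \<subseteq> V \<longrightarrow> W \<noteq> {} \<longrightarrow> W \<noteq> V \<longrightarrow> t \<in> W \<longrightarrow> s \<notin> W \<longrightarrow> Ie E W + k < Mh D W"
      using exchange[OF hyp o o2 kc kc2 sV sp] by blast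
    have tV: "t \<in> V"
    proof (rule ccontr)
      assume "t \<notin> V" then show False using Mh_out[OF hyp o] tn by simp
    qed
    have st: "s \<noteq> t" using sp tn by auto
    obtain P where hp: "hyperpath D s t P" using hp_exists[OF hyp o kc k1 sV tV st] by blast
    define D' where "D' = D - mset P + mset (reversed_arcs s P)"
    have rs: "reverse_step D D'" unfolding reverse_step_def D'_def using hp by blast
    have o': "is_orientation E D'" unfolding D'_def by (rule rev_orient[OF o hp])
    have kc': "k_hyperarc_connected V k D'" unfolding D'_def by (rule rev_kc[OF hyp o hp kc sep])
    have mh: "\<And>v. int (Mh D' {v}) = int (Mh D {v}) + (if v = s then 1 else 0) - (if v = t then 1 else 0)"
      unfolding D'_def using rev_Mh[OF hp] by simp
    have dif: "\<And>v. \<bar>int (Mh D' {v}) - int (Mh D2 {v})\<bar> = \<bar>int (Mh D {v}) - int (Mh D2 {v})\<bar> - (if v = s then 1 else 0) - (if v = t then 1 else 0)"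
    proof -
      fix v show "\<bar>int (Mh D' {v}) - int (Mh D2 {v})\<bar> = \<bar>int (Mh D {v}) - int (Mh D2 {v})\<bar> - (if v = s then 1 else 0) - (if v = t then 1 else 0)"
        using mh[of v] sp tn st by (cases "v = s"; cases "v = t"; simp)
    qed
    have "int (mu D') = (\<Sum>v\<in>V. \<bar>int (Mh D {v}) - int (Mh D2 {v})\<bar> - (if v = s then 1 else 0) - (if v = t then 1 else 0))"
      unfolding mu_int dif ..
    also have "\<dots> = int (mu D) - 2"
      unfolding mu_int sum_subtractf using finV sV tV by (simp add: sum.delta)
    finally have muD': "int (mu D') = int (mu D) - 2" .
    have "size (D' - D2) \<le> size D'" by (rule size_mset_mono) simp
    also have "\<dots> = size E" using size_orient[OF o'] .
    finally have sz: "size (D' - D2) \<le> size E" .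
    have h0: "int (mu D) = int (mu D') + 2" using muD' by simp
    have sz': "int (size (D' - D2)) \<le> int (size E)" using sz by simp
    have h1: "int (mu D) * (int (size E) + 1) = int (mu D') * (int (size E) + 1) + 2 * (int (size E) + 1)"
      unfolding h0 by (simp add: algebra_simps)
    have h2: "int (mu D') * (int (size E) + 1) + int (size (D' - D2)) < int (mu D') * (int (size E) + 1) + 2 * (int (size E) + 1)"
      using sz' by simp
    have "int (mu D' * (size E + 1) + size (D' - D2)) < int (mu D * (size E + 1))"
      unfolding of_nat_add of_nat_mult of_nat_1 h1 using h2 .
    then have "mu D' * (size E + 1) + size (D' - D2) < mu D * (size E + 1)" by (simp only: of_nat_less_iff)
    then have "meas D' < meas D" unfolding meas_def using False by simp
    then show ?thesis using rs o' kc' by blast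
  qed
qed

lemma main_ind:
  assumes "is_orientation E D" "k_hyperarc_connected V k D"
  shows "\<exists>Os. Os \<noteq> [] \<and> hd Os = D \<and> last Os = D2 \<and>
           (\<forall>D\<in>set Os. is_orientation E D \<and> k_hyperarc_connected V k D) \<and>
           (\<forall>i. i + 1 < length Os \<longrightarrow> reverse_step (Os ! i) (Os ! (i + 1)))"
  using assms
proof (induction D rule: measure_induct_rule[where f=meas])
  case (less D)
  show ?case
  proof (cases "D = D2")
    case True
    then show ?thesis using less.prems by (intro exI[of _ "[D]"]) simp
  next
    case False
    obtain D' where D': "reverse_step D D'" "is_orientation E D'" "k_hyperarc_connected V k D'" "meas D' < meas D"
      using step[OF less.prems False] by blast
    obtain Os where Os: "Os \<noteq> []" "hd Os = D'" "last Os = D2"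
      "\<forall>D\<in>set Os. is_orientation E D \<and> k_hyperarc_connected V k D"
      "\<forall>i. i + 1 < length Os \<longrightarrow> reverse_step (Os ! i) (Os ! (i + 1))"
      using less.IH[OF D'(4) D'(2,3)] by blast
    show ?thesis
    proof (intro exI[of _ "D # Os"] conjI allI impI)
      show "D # Os \<noteq> []" by simp
      show "hd (D # Os) = D" by simp
      show "last (D # Os) = D2" using Os(1,3) by simp
      show "\<forall>D\<in>set (D # Os). is_orientation E D \<and> k_hyperarc_connected V k D" using Os(4) less.prems by simp
      fix i assume i: "i + 1 < length (D # Os)"
      show "reverse_step ((D # Os) ! i) ((D # Os) ! (i + 1))"
      proof (cases i)
        case 0 then show ?thesis using D'(1) Os(1,2) by (simp add: hd_conv_nth)
      next
        case (Suc j) then show ?thesis using Os(5) i by simp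
      qed
    qed
  qed
qed

end

theorem mainTheorem3:
  fixes V :: "'v set" and E :: "'v set multiset" and k :: nat
    and O1 O2 :: "'v hyperarc multiset"
  assumes "hypergraph V E"
    and "is_orientation E O1" and "k_hyperarc_connected V k O1"
    and "is_orientation E O2" and "k_hyperarc_connected V k O2"
  shows "\<exists>Os :: 'v hyperarc multiset list.
           Os \<noteq> [] \<and> hd Os = O1 \<and> last Os = O2 \<and>
           (\<forall>D\<in>set Os. is_orientation E D \<and> k_hyperarc_connected V k D) \<and>
           (\<forall>i. i + 1 < length Os \<longrightarrow> reverse_step (Os ! i) (Os ! (i + 1)))"
proof -
  interpret setting V E k O2 using assms(1,4,5) by unfold_locales
  show ?thesis using main_ind[OF assms(2,3)] .
qed

end
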